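(* Let $P$ be a finite self-dual poset and let $\kappa:P\to P$ be an order-reversing bijection which is an involution. For $I\in\mathcal J(P)$ let $I'$ be the order ideal generated by the antichain $\kappa(\max(I))$. Then for all $I\in\mathcal J(P)$, $\rho^{-1}(I')=(\rho(I))'$.
   Context: $\mathcal J(P)$ is the set of order ideals of $P$. Rowmotion $\rho:\mathcal J(P)\to\mathcal J(P)$ sends $I$ to the order ideal generated by $\min(P\setminus I)$; it is a bijection. An order-reversing bijection $\kappa$ satisfies $x\le y\iff\kappa(x)\ge\kappa(y)$. *)

theory Defs
  imports Main
begin

definition order_ideals :: "'a::order set \<Rightarrow> 'a set set" where
  "order_ideals P = {I. I \<subseteq> P \<and> (\<forall>x\<in>I. \<forall>y\<in>P. y \<le> x \<longrightarrow> y \<in> I)}"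

definition minimals :: "'a::order set \<Rightarrow> 'a set" where
  "minimals A = {x\<in>A. \<not> (\<exists>y\<in>A. y < x)}"

definition maximals :: "'a::order set \<Rightarrow> 'a set" where
  "maximals A = {x\<in>A. \<not> (\<exists>y\<in>A. x < y)}"

definition ideal_gen :: "'a::order set \<Rightarrow> 'a set \<Rightarrow> 'a set" where
  "ideal_gen P A = {x\<in>P. \<exists>a\<in>A. x \<le> a}"

definition rowmotion :: "'a::order set \<Rightarrow> 'a set \<Rightarrow> 'a set" where
  "rowmotion P I = ideal_gen P (minimals (P - I))"

definition order_reversing_bij :: "'a::order set \<Rightarrow> ('a \<Rightarrow> 'a) \<Rightarrow> bool" where
  "order_reversing_bij P k \<longleftrightarrow> bij_betw k P P \<and>
     (\<forall>x\<in>P. \<forall>y\<in>P. x \<le> y \<longleftrightarrow> k x \<ge> k y)"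

definition self_dual :: "'a::order set \<Rightarrow> bool" where
  "self_dual P \<longleftrightarrow> (\<exists>k. order_reversing_bij P k)"

definition prime_ideal_op :: "'a::order set \<Rightarrow> ('a \<Rightarrow> 'a) \<Rightarrow> 'a set \<Rightarrow> 'a set" where
  "prime_ideal_op P k I = ideal_gen P (k ` maximals I)"

end

theory Submission
  imports Defs
begin

lemma gen_ideal: "ideal_gen P A \<in> order_ideals P"
  unfolding ideal_gen_def order_ideals_def by (auto intro: order_trans)

lemma max_min: "maximals (minimals B) = minimals B"
  unfolding maximals_def minimals_def by auto

lemma max_gen: assumes "A \<subseteq> P" shows "maximals (ideal_gen P A) = maximals A"
proof
  show "maximals (ideal_gen P A) \<subseteq> maximals A"
  proof
    fix x assume x: "x \<in> maximals (ideal_gen P A)"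
    then obtain a where a: "a \<in> A" "x \<le> a" "x \<in> P"
      unfolding maximals_def ideal_gen_def by auto
    have aG: "a \<in> ideal_gen P A" using a assms unfolding ideal_gen_def by auto
    have "\<not> x < a" using x aG unfolding maximals_def by auto
    then have "x = a" using a by (simp add: less_le)
    moreover have "\<not> (\<exists>y\<in>A. x < y)"
    proof
      assume "\<exists>y\<in>A. x < y"
      then obtain y where "y \<in> A" "x < y" by auto
      moreover have "y \<in> ideal_gen P A" using \<open>y \<in> A\<close> assms unfolding ideal_gen_def by auto
      ultimately show False using x unfolding maximals_def by auto
    qed
    ultimately show "x \<in> maximals A" using a unfolding maximals_def by auto
  qed
  show "maximals A \<subseteq> maximals (ideal_gen P A)"
  proof
    fix x assume x: "x \<in> maximals A"
    have xG: "x \<in> ideal_gen P A" using x assms unfolding maximals_def ideal_gen_def by auto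
    have "\<not> (\<exists>y\<in>ideal_gen P A. x < y)"
    proof
      assume "\<exists>y\<in>ideal_gen P A. x < y"
      then obtain y a where "a \<in> A" "y \<le> a" "x < y" unfolding ideal_gen_def by auto
      then have "x < a" by auto
      then show False using x \<open>a \<in> A\<close> unfolding maximals_def by auto
    qed
    then show "x \<in> maximals (ideal_gen P A)" using xG unfolding maximals_def by auto
  qed
qed

lemma max_row: "maximals (rowmotion P I) = minimals (P - I)"
proof -
  have "minimals (P - I) \<subseteq> P" by (auto simp: minimals_def)
  then show ?thesis unfolding rowmotion_def by (simp add: max_gen max_min)
qed


lemma gen_max:
  assumes "finite P" "B \<in> order_ideals P"
  shows "ideal_gen P (maximals B) = B"
proof
  have BP: "B \<subseteq> P" using assms(2) unfolding order_ideals_def by auto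
  show "ideal_gen P (maximals B) \<subseteq> B"
    using assms(2) unfolding ideal_gen_def maximals_def order_ideals_def by auto
  show "B \<subseteq> ideal_gen P (maximals B)"
  proof
    fix x assume x: "x \<in> B"
    have fB: "finite B" using BP assms(1) finite_subset by blast
    obtain m where "m \<in> B" "x \<le> m" "\<forall>b\<in>B. m \<le> b \<longrightarrow> m = b"
      using finite_has_maximal2[OF fB x] by blast
    then have "m \<in> maximals B" unfolding maximals_def by (auto simp: less_le)
    then show "x \<in> ideal_gen P (maximals B)" using x BP \<open>x \<le> m\<close>
      unfolding ideal_gen_def by auto
  qed
qed

lemma orb_less:
  assumes "order_reversing_bij P k" "x \<in> P" "y \<in> P"
  shows "k x < k y \<longleftrightarrow> y < x"
proof -
  have inj: "inj_on k P" using assms(1) unfolding order_reversing_bij_def bij_betw_def by auto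
  have "x \<le> y \<longleftrightarrow> k x \<ge> k y" "y \<le> x \<longleftrightarrow> k y \<ge> k x"
    using assms unfolding order_reversing_bij_def by auto
  moreover have "k x = k y \<longleftrightarrow> x = y" using inj assms inj_on_eq_iff by metis
  ultimately show ?thesis by (auto simp: less_le)
qed

lemma img_max:
  assumes "order_reversing_bij P k" "B \<subseteq> P"
  shows "k ` maximals B = minimals (k ` B)"
proof -
  have "x \<in> maximals B \<longleftrightarrow> k x \<in> minimals (k ` B)" if "x \<in> B" for x
  proof -
    have "(\<exists>y\<in>B. x < y) \<longleftrightarrow> (\<exists>y\<in>B. k y < k x)"
      using orb_less[OF assms(1)] assms(2) that by blast
    then show ?thesis using that unfolding maximals_def minimals_def by auto
  qed
  moreover have "maximals B \<subseteq> B" "minimals (k ` B) \<subseteq> k ` B"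
    unfolding maximals_def minimals_def by auto
  ultimately show ?thesis by blast
qed

lemma img_min:
  assumes "order_reversing_bij P k" "B \<subseteq> P"
  shows "k ` minimals B = maximals (k ` B)"
proof -
  have "x \<in> minimals B \<longleftrightarrow> k x \<in> maximals (k ` B)" if "x \<in> B" for x
  proof -
    have "(\<exists>y\<in>B. y < x) \<longleftrightarrow> (\<exists>y\<in>B. k x < k y)"
      using orb_less[OF assms(1)] assms(2) that by blast
    then show ?thesis using that unfolding maximals_def minimals_def by auto
  qed
  moreover have "minimals B \<subseteq> B" "maximals (k ` B) \<subseteq> k ` B"
    unfolding maximals_def minimals_def by auto
  ultimately show ?thesis by blast
qed

lemma img_compl_ideal:
  assumes "order_reversing_bij P k" "I \<in> order_ideals P"
  shows "k ` (P - I) \<in> order_ideals P"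
proof -
  have b: "bij_betw k P P" and le: "\<forall>x\<in>P. \<forall>y\<in>P. x \<le> y \<longleftrightarrow> k x \<ge> k y"
    using assms(1) unfolding order_reversing_bij_def by auto
  have s: "k ` P = P" using bij_betw_imp_surj_on[OF b] .
  have A: "k ` (P - I) \<subseteq> P" using s by auto
  have B: "y \<in> k ` (P - I)" if u: "u \<in> P" "u \<notin> I" and y: "y \<in> P" "y \<le> k u" for u y
  proof -
    obtain v where v: "v \<in> P" "y = k v" using y s by auto
    have "u \<le> v" using le u v y by auto
    then have "v \<notin> I" using assms(2) u v unfolding order_ideals_def by auto
    then show "y \<in> k ` (P - I)" using v by auto
  qed
  show ?thesis unfolding order_ideals_def
  proof (intro CollectI conjI A ballI impI)
    fix x y assume x: "x \<in> k ` (P - I)" and y: "y \<in> P" "y \<le> x"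
    then obtain u where "u \<in> P" "u \<notin> I" "x = k u" by auto
    then show "y \<in> k ` (P - I)" using B y by simp
  qed
qed

lemma compl_img:
  assumes "order_reversing_bij P k" "I \<subseteq> P"
  shows "P - k ` (P - I) = k ` I"
proof -
  have b: "bij_betw k P P" using assms(1) unfolding order_reversing_bij_def by auto
  have inj: "inj_on k P" and s: "k ` P = P" using b unfolding bij_betw_def by auto
  show ?thesis
  proof
    show "P - k ` (P - I) \<subseteq> k ` I"
    proof
      fix x assume x: "x \<in> P - k ` (P - I)"
      then obtain u where u: "u \<in> P" "x = k u" using s by blast
      then have "u \<in> I" using x by blast
      then show "x \<in> k ` I" using u by blast
    qed
    show "k ` I \<subseteq> P - k ` (P - I)"
    proof
      fix x assume "x \<in> k ` I"
      then obtain u where u: "u \<in> I" "x = k u" by blast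
      have uP: "u \<in> P" using u assms(2) by blast
      have "x \<notin> k ` (P - I)"
      proof
        assume "x \<in> k ` (P - I)"
        then obtain v where v: "v \<in> P" "v \<notin> I" "x = k v" by blast
        then have "u = v" using inj uP u inj_on_eq_iff by metis
        then show False using u v by blast
      qed
      moreover have "x \<in> P" using u uP s by blast
      ultimately show "x \<in> P - k ` (P - I)" by blast
    qed
  qed
qed

lemma compl_up:
  assumes "finite P" "I \<in> order_ideals P"
  shows "P - I = {x\<in>P. \<exists>m\<in>minimals (P - I). m \<le> x}"
proof
  show "P - I \<subseteq> {x\<in>P. \<exists>m\<in>minimals (P - I). m \<le> x}"
  proof
    fix x assume x: "x \<in> P - I"
    have f: "finite (P - I)" using assms(1) by auto
    obtain m where "m \<in> P - I" "m \<le> x" "\<forall>b\<in>P - I. b \<le> m \<longrightarrow> m = b"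
      using finite_has_minimal2[OF f x] by blast
    then have "m \<in> minimals (P - I)" unfolding minimals_def by (auto simp: less_le)
    then show "x \<in> {x\<in>P. \<exists>m\<in>minimals (P - I). m \<le> x}" using x \<open>m \<le> x\<close> by auto
  qed
  show "{x\<in>P. \<exists>m\<in>minimals (P - I). m \<le> x} \<subseteq> P - I"
    using assms(2) unfolding minimals_def order_ideals_def by auto
qed

lemma row_inj:
  assumes "finite P"
  shows "inj_on (rowmotion P) (order_ideals P)"
proof (rule inj_onI)
  fix I J assume I: "I \<in> order_ideals P" and J: "J \<in> order_ideals P"
    and e: "rowmotion P I = rowmotion P J"
  have "maximals (rowmotion P I) = minimals (P - I)" for I by (rule max_row)
  then have "minimals (P - I) = minimals (P - J)" using e by metis
  then have "P - I = P - J" using compl_up[OF assms I] compl_up[OF assms J] by simp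
  moreover have "I \<subseteq> P" "J \<subseteq> P" using I J unfolding order_ideals_def by auto
  ultimately show "I = J" by blast
qed

theorem lemma5p13:
  fixes P :: "'a::order set" and \<kappa> :: "'a \<Rightarrow> 'a"
  assumes "finite P"
    and "self_dual P"
    and "order_reversing_bij P \<kappa>"
    and "\<forall>x\<in>P. \<kappa> (\<kappa> x) = x"
    and "I \<in> order_ideals P"
  shows "the_inv_into (order_ideals P) (rowmotion P) (prime_ideal_op P \<kappa> I)
         = prime_ideal_op P \<kappa> (rowmotion P I)"
proof (rule the_inv_into_f_eq[OF row_inj[OF assms(1)]])
  have IP: "I \<subseteq> P" using assms(5) unfolding order_ideals_def by auto
  have "maximals (rowmotion P I) = minimals (P - I)" by (rule max_row)
  then have "prime_ideal_op P \<kappa> (rowmotion P I) = ideal_gen P (\<kappa> ` minimals (P - I))"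
    unfolding prime_ideal_op_def by simp
  also have "\<dots> = ideal_gen P (maximals (\<kappa> ` (P - I)))"
    using img_min[OF assms(3)] by auto
  also have "\<dots> = \<kappa> ` (P - I)"
    using gen_max[OF assms(1) img_compl_ideal[OF assms(3,5)]] .
  finally have e: "prime_ideal_op P \<kappa> (rowmotion P I) = \<kappa> ` (P - I)" .
  show "rowmotion P (prime_ideal_op P \<kappa> (rowmotion P I)) = prime_ideal_op P \<kappa> I"
    unfolding e unfolding rowmotion_def compl_img[OF assms(3) IP] prime_ideal_op_def
    using img_max[OF assms(3) IP] by simp
  show "prime_ideal_op P \<kappa> (rowmotion P I) \<in> order_ideals P"
    unfolding prime_ideal_op_def by (rule gen_ideal)
qed

end
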